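(* Let $G$ be an edge-colored graph of order $n\geq 6$ such that $|CN(u)\cup CN(v)|\geq n-1$ for every pair of vertices $u$ and $v$ in $V(G)$. Then $G$ contains a rainbow $C_3$ unless $G$ is a rainbow $K_{\lceil n/2\rceil,\lfloor n/2\rfloor}$ (i.e. $G$ is a complete bipartite graph with parts of sizes $\lceil n/2\rceil,\lfloor n/2\rfloor$ all of whose edges have distinct colors).
   Context: An edge-colored graph is a finite simple graph $G$ with a map $C:E(G)\to\mathbb{N}$. For $v\in V(G)$, the color neighborhood $CN(v)$ is the set of colors assigned to edges incident to $v$. A subgraph is rainbow if all its edges have distinct colors; $C_3$ is a triangle. *)

theory Defs
  imports Main
begin

definition simple_graph :: "'a set \<Rightarrow> 'a set set \<Rightarrow> bool" where
  "simple_graph V E \<longleftrightarrow> finite V \<and> (\<forall>e\<in>E. e \<subseteq> V \<and> card e = 2)"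

definition color_nbhd :: "'a set set \<Rightarrow> ('a set \<Rightarrow> nat) \<Rightarrow> 'a \<Rightarrow> nat set" where
  "color_nbhd E C v = C ` {e \<in> E. v \<in> e}"

definition has_rainbow_triangle :: "'a set set \<Rightarrow> ('a set \<Rightarrow> nat) \<Rightarrow> bool" where
  "has_rainbow_triangle E C \<longleftrightarrow>
     (\<exists>x y z. x \<noteq> y \<and> y \<noteq> z \<and> x \<noteq> z \<and>
        {x, y} \<in> E \<and> {y, z} \<in> E \<and> {x, z} \<in> E \<and>
        C {x, y} \<noteq> C {y, z} \<and> C {y, z} \<noteq> C {x, z} \<and> C {x, y} \<noteq> C {x, z})"

definition is_rainbow_complete_bipartite ::
  "'a set \<Rightarrow> 'a set set \<Rightarrow> ('a set \<Rightarrow> nat) \<Rightarrow> nat \<Rightarrow> nat \<Rightarrow> bool" where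
  "is_rainbow_complete_bipartite V E C p q \<longleftrightarrow>
     (\<exists>A B. A \<inter> B = {} \<and> A \<union> B = V \<and> card A = p \<and> card B = q \<and>
        E = {{a, b} | a b. a \<in> A \<and> b \<in> B}) \<and> inj_on C E"

end

theory Submission
  imports Defs
begin

definition Sc :: "'a set set \<Rightarrow> ('a set \<Rightarrow> nat) \<Rightarrow> 'a \<Rightarrow> 'a \<Rightarrow> 'a \<Rightarrow> nat set" where
  "Sc E C u v w = ((if {u,w} \<in> E then {C {u,w}} else {}) \<union> (if {v,w} \<in> E then {C {v,w}} else {})) - {C {u,v}}"

lemma card_le1_mem: "finite A \<Longrightarrow> card A \<le> 1 \<Longrightarrow> a \<in> A \<Longrightarrow> A = {a}"
  using card_le_Suc0_iff_eq by fastforce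

lemma sub1_card: "A \<subseteq> {a} \<Longrightarrow> card A \<le> 1"
  using card_mono[of "{a}" A] by simp

lemma aux1: "(c::nat) = b \<Longrightarrow> {a,b} - {c} \<subseteq> {a}" by auto
lemma aux2: "(b::nat) = a \<Longrightarrow> {a,b} - {c} \<subseteq> {a}" by auto
lemma aux3: "(c::nat) = a \<Longrightarrow> {a,b} - {c} \<subseteq> {b}" by auto

locale RT =
  fixes V :: "'a set" and E :: "'a set set" and C :: "'a set \<Rightarrow> nat" and n :: nat
  assumes sg: "simple_graph V E"
    and cV: "card V = n"
    and n6: "n \<ge> 6"
    and H: "\<forall>u\<in>V. \<forall>v\<in>V. u \<noteq> v \<longrightarrow> card (color_nbhd E C u \<union> color_nbhd E C v) \<ge> n - 1"
    and NR: "\<not> has_rainbow_triangle E C"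
begin

lemma finV: "finite V" using sg by (simp add: simple_graph_def)

lemma finE: "finite E"
proof -
  have "E \<subseteq> Pow V" using sg by (auto simp: simple_graph_def)
  thus ?thesis using finV finite_subset by blast
qed

lemma edgeD: "{x,y} \<in> E \<Longrightarrow> x \<noteq> y \<and> x \<in> V \<and> y \<in> V"
  using sg unfolding simple_graph_def by (cases "x = y") auto

lemma edgeE: "e \<in> E \<Longrightarrow> \<exists>x y. e = {x,y} \<and> x \<noteq> y"
  using sg card_2_iff unfolding simple_graph_def by blast

lemma finCN: "finite (color_nbhd E C u)"
  using finE unfolding color_nbhd_def by simp

lemma Hc: "u \<in> V \<Longrightarrow> v \<in> V \<Longrightarrow> u \<noteq> v \<Longrightarrow> card (color_nbhd E C u \<union> color_nbhd E C v) \<ge> n - 1"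
  using H by blast

lemma NR': assumes "{x,y}\<in>E" "{y,z}\<in>E" "{x,z}\<in>E"
  shows "C{x,y}=C{y,z} \<or> C{y,z}=C{x,z} \<or> C{x,y}=C{x,z}"
proof (rule ccontr)
  assume "\<not> ?thesis"
  hence "has_rainbow_triangle E C" unfolding has_rainbow_triangle_def using assms edgeD
    by (intro exI[of _ x] exI[of _ y] exI[of _ z]) auto
  with NR show False by blast
qed

lemma edge_other: assumes "e \<in> E" "p \<in> e" obtains x where "e = {p,x}" "x \<noteq> p" "x \<in> V" "p \<in> V"
proof -
  obtain x y where xy: "e = {x,y}" "x \<noteq> y" using edgeE assms by blast
  show ?thesis
  proof (cases "p = x")
    case True thus ?thesis using that xy assms edgeD by auto
  next
    case False hence "p = y" using xy assms by auto
    thus ?thesis using that xy assms edgeD by (metis insert_commute)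
  qed
qed

lemma finS: "finite (Sc E C u v w)" by (simp add: Sc_def)

lemma cover: assumes uv: "{u,v}\<in>E"
  shows "color_nbhd E C u \<union> color_nbhd E C v \<subseteq> insert (C{u,v}) (\<Union>w\<in>V-{u,v}. Sc E C u v w)"
proof
  fix y assume "y \<in> color_nbhd E C u \<union> color_nbhd E C v"
  then obtain e p where e: "e\<in>E" "y = C e" "p \<in> e" "p \<in> {u,v}" by (auto simp: color_nbhd_def)
  then obtain x where x: "e = {p,x}" "x \<noteq> p" "x \<in> V" using edge_other by blast
  show "y \<in> insert (C{u,v}) (\<Union>w\<in>V-{u,v}. Sc E C u v w)"
  proof (cases "x \<in> {u,v}")
    case True
    hence "e = {u,v}" using x e by auto
    thus ?thesis using e by simp
  next
    case False
    have "y = C{u,v} \<or> y \<in> Sc E C u v x" using e x False unfolding Sc_def by auto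
    thus ?thesis using False x by blast
  qed
qed

lemma core: assumes uv: "{u,v}\<in>E" and w1: "w1 \<in> V-{u,v}"
  and sub: "Sc E C u v w1 \<subseteq> (\<Union>w\<in>V-{u,v}-{w1}. Sc E C u v w)"
  and cS: "\<And>w. w \<in> V-{u,v} \<Longrightarrow> card (Sc E C u v w) \<le> 1"
  shows False
proof -
  have u: "u \<noteq> v" "u \<in> V" "v \<in> V" using edgeD uv by auto
  have eq: "(\<Union>w\<in>V-{u,v}. Sc E C u v w) = (\<Union>w\<in>V-{u,v}-{w1}. Sc E C u v w)"
    using sub w1 by blast
  let ?I = "V-{u,v}-{w1}"
  have fI: "finite ?I" using finV by simp
  have cI: "card ?I = n - 3"
  proof -
    have "?I = V - {u,v,w1}" by auto
    moreover have "card {u,v,w1} = 3" using u w1 by auto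
    moreover have "{u,v,w1} \<subseteq> V" using u w1 by auto
    ultimately show ?thesis using cV finV by (simp add: card_Diff_subset)
  qed
  have "card (\<Union>w\<in>?I. Sc E C u v w) \<le> (\<Sum>w\<in>?I. card (Sc E C u v w))"
    using card_UN_le fI by blast
  also have "\<dots> \<le> (\<Sum>w\<in>?I. 1)" using cS by (intro sum_mono) auto
  also have "\<dots> = n - 3" using cI by simp
  finally have c1: "card (\<Union>w\<in>?I. Sc E C u v w) \<le> n - 3" .
  have fU: "finite (\<Union>w\<in>?I. Sc E C u v w)" using fI finS by blast
  have "card (insert (C{u,v}) (\<Union>w\<in>?I. Sc E C u v w)) \<le> n - 2"
  proof -
    have "card (insert (C{u,v}) (\<Union>w\<in>?I. Sc E C u v w)) \<le> Suc (card (\<Union>w\<in>?I. Sc E C u v w))"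
      using fU by (simp add: card_insert_if)
    thus ?thesis using c1 n6 by linarith
  qed
  moreover have "card (color_nbhd E C u \<union> color_nbhd E C v) \<le> card (insert (C{u,v}) (\<Union>w\<in>?I. Sc E C u v w))"
    using cover[OF uv] eq fU by (intro card_mono) auto
  moreover have "card (color_nbhd E C u \<union> color_nbhd E C v) \<ge> n - 1" using Hc u by blast
  ultimately show False using n6 by linarith
qed

lemma cardS: assumes uv: "{u,v}\<in>E" and w: "w \<in> V-{u,v}"
  shows "card (Sc E C u v w) \<le> 1"
proof (cases "{u,w} \<in> E \<and> {v,w} \<in> E")
  case True
  hence S: "Sc E C u v w = {C{u,w}, C{v,w}} - {C{u,v}}" unfolding Sc_def by auto
  have "C{u,v}=C{v,w} \<or> C{v,w}=C{u,w} \<or> C{u,v}=C{u,w}" using NR'[OF uv] True by blast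
  moreover have "C{u,v}=C{v,w} \<Longrightarrow> Sc E C u v w \<subseteq> {C{u,w}}" unfolding S by (rule aux1)
  moreover have "C{v,w}=C{u,w} \<Longrightarrow> Sc E C u v w \<subseteq> {C{u,w}}" unfolding S by (rule aux2)
  moreover have "C{u,v}=C{u,w} \<Longrightarrow> Sc E C u v w \<subseteq> {C{v,w}}" unfolding S by (rule aux3)
  ultimately obtain z where "Sc E C u v w \<subseteq> {z}" by blast
  thus ?thesis by (rule sub1_card)
next
  case False
  hence "Sc E C u v w \<subseteq> {C{u,w}} \<or> Sc E C u v w \<subseteq> {C{v,w}}" unfolding Sc_def by auto
  then obtain z where "Sc E C u v w \<subseteq> {z}" by blast
  thus ?thesis by (rule sub1_card)
qed

lemma E1: assumes "{u,v}\<in>E" "w \<in> V-{u,v}" shows "Sc E C u v w \<noteq> {}"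
proof
  assume "Sc E C u v w = {}"
  hence "Sc E C u v w \<subseteq> (\<Union>w'\<in>V-{u,v}-{w}. Sc E C u v w')" by simp
  from core[OF assms this cardS[OF assms(1)]] show False .
qed

lemma E2: assumes "{u,v}\<in>E" "w1 \<in> V-{u,v}" "w2 \<in> V-{u,v}" "w1 \<noteq> w2"
  shows "\<not> Sc E C u v w1 \<subseteq> Sc E C u v w2"
proof
  assume "Sc E C u v w1 \<subseteq> Sc E C u v w2"
  moreover have "Sc E C u v w2 \<subseteq> (\<Union>w\<in>V-{u,v}-{w1}. Sc E C u v w)"
    using assms(3,4) by (intro UN_upper) auto
  ultimately have "Sc E C u v w1 \<subseteq> (\<Union>w\<in>V-{u,v}-{w1}. Sc E C u v w)" by (rule subset_trans)
  from core[OF assms(1,2) this cardS[OF assms(1)]] show False .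
qed

lemma M: assumes wu: "{w,u}\<in>E" and wv: "{w,v}\<in>E" and wx: "{w,x}\<in>E"
  and d: "u\<noteq>v" "u\<noteq>x" "v\<noteq>x" and eq: "C{w,u}=C{w,v}"
  shows "C{w,x}=C{w,u}"
proof (rule ccontr)
  assume ne: "C{w,x} \<noteq> C{w,u}"
  have uI: "u \<in> V-{w,x}" using edgeD[OF wu] d by auto
  have vI: "v \<in> V-{w,x}" using edgeD[OF wv] d by auto
  have "C{w,u} \<in> Sc E C w x u" using wu ne unfolding Sc_def by auto
  hence 1: "Sc E C w x u = {C{w,u}}" by (rule card_le1_mem[OF finS cardS[OF wx uI]])
  have "C{w,u} \<in> Sc E C w x v" using wv ne eq unfolding Sc_def by auto
  hence 2: "Sc E C w x v = {C{w,u}}" by (rule card_le1_mem[OF finS cardS[OF wx vI]])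
  show False using E2[OF wx uI vI d(1)] 1 2 by simp
qed

lemma mono: assumes wu: "{w,u}\<in>E" and wv: "{w,v}\<in>E" and d: "u\<noteq>v" and eq: "C{w,u}=C{w,v}"
  shows "color_nbhd E C w \<subseteq> {C{w,u}}"
proof
  fix y assume "y \<in> color_nbhd E C w"
  then obtain e where e: "e\<in>E" "y = C e" "w\<in>e" by (auto simp: color_nbhd_def)
  then obtain x where x: "e = {w,x}" "x \<noteq> w" using edge_other by blast
  show "y \<in> {C{w,u}}"
  proof (cases "x = u \<or> x = v")
    case True thus ?thesis using e x eq by auto
  next
    case False thus ?thesis using M[OF wu wv _ d] e x eq by auto
  qed
qed

lemma twomono: assumes "p \<in> V" "q \<in> V" "p \<noteq> q" "color_nbhd E C p \<subseteq> {a}" "color_nbhd E C q \<subseteq> {b}"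
  shows False
proof -
  have "card (color_nbhd E C p \<union> color_nbhd E C q) \<le> card {a,b}"
    using assms by (intro card_mono) auto
  also have "\<dots> \<le> 2" by (simp add: card_insert_if)
  finally show False using Hc[OF assms(1-3)] n6 by linarith
qed

lemma apex: assumes uw: "{u,w}\<in>E" and vw: "{v,w}\<in>E" and uv: "{u,v}\<in>E" and eq: "C{u,w}=C{v,w}"
  shows False
proof -
  have wu: "{w,u}\<in>E" and wv: "{w,v}\<in>E" and vu: "{v,u}\<in>E" using uw vw uv by (simp_all add: insert_commute)
  have d: "u\<noteq>v" "u\<noteq>w" "v\<noteq>w" "u\<in>V" "v\<in>V" "w\<in>V" using edgeD uw vw uv by auto
  define a where "a = C{w,u}"
  have aw: "C{w,v} = a" "C{u,w} = a" "C{v,w} = a" using eq by (simp_all add: a_def insert_commute)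
  have eqw: "C{w,u}=C{w,v}" using aw a_def by simp
  have monoW: "color_nbhd E C w \<subseteq> {a}" using mono[OF wu wv d(1)] aw by (simp add: a_def)
  obtain x where x: "x\<in>V" "x\<noteq>u" "x\<noteq>v" "x\<noteq>w"
  proof -
    have "\<not> V \<subseteq> {u,v,w}"
    proof
      assume "V \<subseteq> {u,v,w}"
      hence "card V \<le> card {u,v,w}" by (intro card_mono) auto
      also have "\<dots> \<le> 3" by (simp add: card_insert_if)
      finally show False using cV n6 by linarith
    qed
    thus ?thesis using that by blast
  qed
  have cne: "C{u,v} \<noteq> a" using E1[OF uv, of w] d aw unfolding Sc_def by (auto simp: uw vw)
  have ux: "{u,x}\<in>E" "C{u,x} \<noteq> a"
  proof -
    have "Sc E C w u x \<noteq> {}" using E1[OF wu, of x] x by auto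
    moreover have "{w,x}\<in>E \<Longrightarrow> C{w,x} = a" using M[OF wu wv _ d(1)] x eqw by (simp add: a_def)
    ultimately show "{u,x}\<in>E" "C{u,x} \<noteq> a" unfolding Sc_def a_def by (auto split: if_splits)
  qed
  have vx: "{v,x}\<in>E" "C{v,x} \<noteq> a"
  proof -
    have "Sc E C w v x \<noteq> {}" using E1[OF wv, of x] x by auto
    moreover have "{w,x}\<in>E \<Longrightarrow> C{w,x} = a" using M[OF wu wv _ d(1)] x eqw by (simp add: a_def)
    ultimately show "{v,x}\<in>E" "C{v,x} \<noteq> a" unfolding Sc_def using aw by (auto split: if_splits)
  qed
  have n1: "C{u,x} \<noteq> C{u,v}"
  proof
    assume "C{u,x} = C{u,v}"
    hence "C{u,w} = C{u,v}" using M[OF uv ux(1) uw] x d by auto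
    thus False using aw cne by simp
  qed
  have n2: "C{v,x} \<noteq> C{u,v}"
  proof
    assume "C{v,x} = C{u,v}"
    hence "C{v,w} = C{v,u}" using M[OF vu vx(1) vw] x d by (auto simp: insert_commute)
    thus False using aw cne by (simp add: insert_commute)
  qed
  have "C{v,x} = C{u,x}" using NR'[OF uv vx(1) ux(1)] n1 n2 by auto
  hence "color_nbhd E C x \<subseteq> {C{x,u}}" using mono[of x u v] ux vx d by (simp add: insert_commute)
  thus False using twomono[OF d(6) x(1) _ monoW] x by blast
qed

lemma trifree: assumes "{a,b}\<in>E" "{b,c}\<in>E" "{a,c}\<in>E" shows False
proof -
  have "C{a,b}=C{b,c} \<or> C{b,c}=C{a,c} \<or> C{a,b}=C{a,c}" using NR' assms by blast
  moreover have "C{a,b}=C{b,c} \<Longrightarrow> False" using apex[of a b c] assms by (simp add: insert_commute)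
  moreover have "C{b,c}=C{a,c} \<Longrightarrow> False" using apex[of b c a] assms by (simp add: insert_commute)
  moreover have "C{a,b}=C{a,c} \<Longrightarrow> False" using apex[of b a c] assms by (simp add: insert_commute)
  ultimately show False by blast
qed

lemma Sform: assumes uv: "{u,v}\<in>E" and w: "w \<in> V-{u,v}" and x: "x \<in> {u,v}" and xw: "{x,w}\<in>E"
  shows "Sc E C u v w = {C{x,w}} - {C{u,v}}"
proof (cases "x = u")
  case True
  have uw: "{u,w}\<in>E" using True xw by simp
  have "{v,w} \<notin> E" using trifree[of u v w, OF uv _ uw] by blast
  thus ?thesis using True xw unfolding Sc_def by simp
next
  case False
  hence xv: "x = v" using x by auto
  have vw: "{v,w}\<in>E" using xv xw by simp
  have "{u,w} \<notin> E" using trifree[of u v w, OF uv vw] by blast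
  thus ?thesis using xv xw unfolding Sc_def by simp
qed

lemma Q1: assumes uv: "{u,v}\<in>E" and w: "w \<in> V-{u,v}" and x: "x \<in> {u,v}" and xw: "{x,w}\<in>E"
  shows "C{x,w} \<noteq> C{u,v}"
  using E1[OF uv w] Sform[OF assms] by auto

lemma Q2: assumes uv: "{u,v}\<in>E" and w1: "w1 \<in> V-{u,v}" and x1: "x1 \<in> {u,v}" and xw1: "{x1,w1}\<in>E"
  and w2: "w2 \<in> V-{u,v}" and x2: "x2 \<in> {u,v}" and xw2: "{x2,w2}\<in>E" and d: "w1 \<noteq> w2"
  shows "C{x1,w1} \<noteq> C{x2,w2}"
  using E2[OF uv w1 w2 d] Sform[OF uv w1 x1 xw1] Sform[OF uv w2 x2 xw2] Q1[OF uv w1 x1 xw1] by auto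

lemma two_elems: assumes "finite X" "card X \<ge> 2" obtains p q where "p\<in>X" "q\<in>X" "p\<noteq>q"
  using card_le_Suc0_iff_eq[of X] assms by force

lemma pairbound: assumes "p\<in>V" "q\<in>V" "p\<noteq>q" "card (color_nbhd E C p) \<le> k" "card (color_nbhd E C q) \<le> k"
  shows "n - 1 \<le> 2*k"
proof -
  have "n - 1 \<le> card (color_nbhd E C p \<union> color_nbhd E C q)" using Hc assms by blast
  also have "\<dots> \<le> card (color_nbhd E C p) + card (color_nbhd E C q)" by (rule card_Un_le)
  finally show ?thesis using assms by linarith
qed

lemma exedge: obtains u0 v0 where "{u0,v0}\<in>E"
proof -
  have "E \<noteq> {}"
  proof
    assume E0: "E = {}"
    have "card V \<ge> 2" using cV n6 by simp
    then obtain p q where pq: "p\<in>V" "q\<in>V" "p\<noteq>q" using two_elems finV by blast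
    have "n - 1 \<le> 2*0" by (rule pairbound[OF pq]) (simp_all add: E0 color_nbhd_def)
    thus False using n6 by simp
  qed
  then obtain e where "e\<in>E" by blast
  thus ?thesis using edgeE that by blast
qed

lemma final: "is_rainbow_complete_bipartite V E C ((n + 1) div 2) (n div 2)"
proof -
  obtain u0 v0 where e0: "{u0,v0}\<in>E" using exedge by blast
  have d0: "u0\<noteq>v0" "u0\<in>V" "v0\<in>V" using edgeD[OF e0] by auto
  define A where "A = {x\<in>V. {x,v0}\<in>E}"
  define B where "B = V - A"
  have AB: "A \<inter> B = {}" "A \<union> B = V" using A_def B_def by auto
  have u0A: "u0\<in>A" using A_def e0 d0 by auto
  have v0B: "v0\<in>B" using A_def B_def d0 edgeD[of v0 v0] by auto
  have Bnb: "{u0,b}\<in>E" if b: "b\<in>B" "b\<noteq>v0" for b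
  proof -
    have bI: "b \<in> V-{u0,v0}" using b u0A AB B_def by auto
    have "{v0,b}\<notin>E" using b A_def B_def by (auto simp: insert_commute)
    thus ?thesis using E1[OF e0 bI] unfolding Sc_def by (auto split: if_splits)
  qed
  have edges: "\<exists>a\<in>A. \<exists>b\<in>B. e = {a,b}" if e: "e\<in>E" for e
  proof -
    obtain x y where xy: "e = {x,y}" "x\<noteq>y" using edgeE e by blast
    have xyV: "x\<in>V" "y\<in>V" using edgeD e xy by auto
    have ee: "{x,y}\<in>E" "{y,x}\<in>E" using e xy by (auto simp: insert_commute)
    show ?thesis
    proof (cases "x\<in>A")
      case xA: True
      show ?thesis
      proof (cases "y\<in>A")
        case True
        thus ?thesis using trifree[of x y v0] ee xA A_def by auto
      next
        case False thus ?thesis using xA xyV xy B_def by auto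
      qed
    next
      case xB: False
      show ?thesis
      proof (cases "y\<in>A")
        case True thus ?thesis using xB xyV xy B_def by (auto simp: insert_commute)
      next
        case yB: False
        have "x \<noteq> v0" using yB ee xyV A_def by (auto simp: insert_commute)
        moreover have "y \<noteq> v0" using xB ee xyV A_def by (auto simp: insert_commute)
        ultimately have "{u0,x}\<in>E" "{u0,y}\<in>E" using Bnb xB yB xyV B_def by auto
        thus ?thesis using trifree[of u0 x y] ee by auto
      qed
    qed
  qed
  have compl: "{a,b}\<in>E" if a: "a\<in>A" and b: "b\<in>B" for a b
  proof (cases "b = v0")
    case True thus ?thesis using a A_def by auto
  next
    case False
    have av: "{a,v0}\<in>E" using a A_def by auto
    have bI: "b \<in> V-{a,v0}" using a b AB False by auto
    have "{v0,b}\<notin>E" using b A_def B_def by (auto simp: insert_commute)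
    thus ?thesis using E1[OF av bI] unfolding Sc_def by (auto split: if_splits)
  qed
  have Eeq: "E = {{a,b} | a b. a\<in>A \<and> b\<in>B}" using edges compl by blast
  have Eeq': "E = {{a,b} | a b. a\<in>B \<and> b\<in>A}"
  proof (rule set_eqI)
    fix e show "e\<in>E \<longleftrightarrow> e \<in> {{a,b} | a b. a\<in>B \<and> b\<in>A}"
    proof
      assume "e\<in>E" then obtain a b where ab: "a\<in>A" "b\<in>B" "e={a,b}" using edges by blast
      hence "e = {b,a}" by (simp add: insert_commute)
      thus "e \<in> {{a,b} | a b. a\<in>B \<and> b\<in>A}" using ab by blast
    next
      assume "e \<in> {{a,b} | a b. a\<in>B \<and> b\<in>A}"
      then obtain a b where ab: "a\<in>B" "b\<in>A" "e={a,b}" by blast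
      hence "e = {b,a}" by (simp add: insert_commute)
      thus "e\<in>E" using compl ab by simp
    qed
  qed
  have inj: "inj_on C E"
  proof (rule inj_onI)
    fix e1 e2 assume e1: "e1\<in>E" and e2: "e2\<in>E" and ceq: "C e1 = C e2"
    obtain a1 b1 where ab1: "a1\<in>A" "b1\<in>B" "e1={a1,b1}" using edges[OF e1] by blast
    obtain a2 b2 where ab2: "a2\<in>A" "b2\<in>B" "e2={a2,b2}" using edges[OF e2] by blast
    have ed: "{a1,b2}\<in>E" using compl ab1 ab2 by auto
    have V: "a1\<in>V" "a2\<in>V" "b1\<in>V" "b2\<in>V" using ab1 ab2 AB by auto
    have ne: "a1\<noteq>b1" "a1\<noteq>b2" "a2\<noteq>b1" "a2\<noteq>b2" using ab1 ab2 AB by auto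
    show "e1 = e2"
    proof (cases "a1 = a2")
      case aeq: True
      show ?thesis
      proof (cases "b1 = b2")
        case True thus ?thesis using aeq ab1 ab2 by simp
      next
        case False
        have "C{a1,b1} \<noteq> C{a1,b2}"
          using Q1[OF ed, of b1 a1] V ne False compl ab1 by auto
        thus ?thesis using ceq ab1 ab2 aeq by simp
      qed
    next
      case ane: False
      show ?thesis
      proof (cases "b1 = b2")
        case True
        have "C{b2,a2} \<noteq> C{a1,b2}"
          using Q1[OF ed, of a2 b2] V ne ane compl ab2 by (auto simp: insert_commute)
        thus ?thesis using ceq ab1 ab2 True by (simp add: insert_commute)
      next
        case bne: False
        have "C{a1,b1} \<noteq> C{b2,a2}"
          using Q2[OF ed, of b1 a1 a2 b2] V ne ane bne compl ab1 ab2 by (auto simp: insert_commute)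
        thus ?thesis using ceq ab1 ab2 by (simp add: insert_commute)
      qed
    qed
  qed
  have finA: "finite A" "finite B" using AB finV by (auto intro: finite_subset)
  have cAB: "card A + card B = n" using AB finA cV card_Un_disjoint by metis
  have cnA: "card (color_nbhd E C a) \<le> card B" if a: "a\<in>A" for a
  proof -
    have "{e\<in>E. a\<in>e} \<subseteq> (\<lambda>b. {a,b}) ` B"
    proof
      fix e assume "e \<in> {e\<in>E. a\<in>e}"
      then obtain a' b' where "a'\<in>A" "b'\<in>B" "e={a',b'}" "a\<in>e" using edges by blast
      thus "e \<in> (\<lambda>b. {a,b}) ` B" using a AB by auto
    qed
    hence "card {e\<in>E. a\<in>e} \<le> card ((\<lambda>b. {a,b}) ` B)" using finA by (intro card_mono) auto
    also have "\<dots> \<le> card B" by (rule card_image_le[OF finA(2)])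
    finally have "card {e\<in>E. a\<in>e} \<le> card B" .
    moreover have f: "finite {e\<in>E. a\<in>e}" using finE by simp
    ultimately show ?thesis unfolding color_nbhd_def using le_trans[OF card_image_le[OF f]] by blast
  qed
  have cnB: "card (color_nbhd E C b) \<le> card A" if b: "b\<in>B" for b
  proof -
    have "{e\<in>E. b\<in>e} \<subseteq> (\<lambda>a. {b,a}) ` A"
    proof
      fix e assume "e \<in> {e\<in>E. b\<in>e}"
      then obtain a' b' where "a'\<in>A" "b'\<in>B" "e={a',b'}" "b\<in>e" using edges by blast
      thus "e \<in> (\<lambda>a. {b,a}) ` A" using b AB by auto
    qed
    hence "card {e\<in>E. b\<in>e} \<le> card ((\<lambda>a. {b,a}) ` A)" using finA by (intro card_mono) auto
    also have "\<dots> \<le> card A" by (rule card_image_le[OF finA(1)])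
    finally have "card {e\<in>E. b\<in>e} \<le> card A" .
    moreover have f: "finite {e\<in>E. b\<in>e}" using finE by simp
    ultimately show ?thesis unfolding color_nbhd_def using le_trans[OF card_image_le[OF f]] by blast
  qed
  have hA: "n - 1 \<le> 2 * card B" if c2: "card A \<ge> 2"
  proof -
    obtain p q where pq: "p\<in>A" "q\<in>A" "p\<noteq>q" using two_elems[OF finA(1) c2] by blast
    have "p\<in>V" "q\<in>V" using pq AB by auto
    from pairbound[OF this pq(3) cnA[OF pq(1)] cnA[OF pq(2)]] show ?thesis .
  qed
  have hB: "n - 1 \<le> 2 * card A" if c2: "card B \<ge> 2"
  proof -
    obtain p q where pq: "p\<in>B" "q\<in>B" "p\<noteq>q" using two_elems[OF finA(2) c2] by blast
    have "p\<in>V" "q\<in>V" using pq AB by auto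
    from pairbound[OF this pq(3) cnB[OF pq(1)] cnB[OF pq(2)]] show ?thesis .
  qed
  have pos: "card A \<ge> 1" "card B \<ge> 1" using u0A v0B finA card_0_eq by fastforce+
  have "card A \<ge> 2"
  proof (rule ccontr)
    assume "\<not> card A \<ge> 2"
    hence "card B \<ge> 2" using cAB n6 by linarith
    thus False using hB \<open>\<not> card A \<ge> 2\<close> n6 by linarith
  qed
  moreover have "card B \<ge> 2"
  proof (rule ccontr)
    assume "\<not> card B \<ge> 2"
    hence "card A \<ge> 2" using cAB n6 by linarith
    thus False using hA \<open>\<not> card B \<ge> 2\<close> n6 by linarith
  qed
  ultimately have h: "n - 1 \<le> 2 * card B" "n - 1 \<le> 2 * card A" using hA hB by auto
  have "(card A = (n+1) div 2 \<and> card B = n div 2) \<or> (card B = (n+1) div 2 \<and> card A = n div 2)"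
    using h cAB n6 by presburger
  thus ?thesis
  proof
    assume c: "card A = (n+1) div 2 \<and> card B = n div 2"
    have "\<exists>A B. A \<inter> B = {} \<and> A \<union> B = V \<and> card A = (n+1) div 2 \<and> card B = n div 2 \<and>
        E = {{a, b} | a b. a \<in> A \<and> b \<in> B}"
      apply (rule exI[of _ A], rule exI[of _ B]) using AB c Eeq by simp
    thus ?thesis unfolding is_rainbow_complete_bipartite_def using inj by blast
  next
    assume c: "card B = (n+1) div 2 \<and> card A = n div 2"
    have "B \<inter> A = {}" "B \<union> A = V" using AB by auto
    hence "\<exists>A B. A \<inter> B = {} \<and> A \<union> B = V \<and> card A = (n+1) div 2 \<and> card B = n div 2 \<and>
        E = {{a, b} | a b. a \<in> A \<and> b \<in> B}"
      apply - apply (rule exI[of _ B], rule exI[of _ A]) using c Eeq' by simp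
    thus ?thesis unfolding is_rainbow_complete_bipartite_def using inj by blast
  qed
qed

end

theorem theorem7:
  fixes V :: "'a set" and E :: "'a set set" and C :: "'a set \<Rightarrow> nat" and n :: nat
  assumes "simple_graph V E"
    and "card V = n"
    and "n \<ge> 6"
    and "\<forall>u\<in>V. \<forall>v\<in>V. u \<noteq> v \<longrightarrow> card (color_nbhd E C u \<union> color_nbhd E C v) \<ge> n - 1"
  shows "has_rainbow_triangle E C \<or>
         is_rainbow_complete_bipartite V E C ((n + 1) div 2) (n div 2)"
proof (cases "has_rainbow_triangle E C")
  case True thus ?thesis by blast
next
  case False
  interpret RT V E C n using assms False by unfold_locales auto
  show ?thesis using final by blast
qed

end
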